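(* Let $l:\mathbb{R}^p\to\mathbb{R}$ be a convex and differentiable function, let $\lambda_1\ge\lambda_2\ge\dots\ge\lambda_p\ge 0$ be arbitrary, and let $$\hat b\in\operatorname{argmin}_{b\in\mathbb{R}^p}\Big\{l(b)+\sum_{i=1}^p\lambda_i|b|_{(i)}\Big\}.$$ Let $R=\#\{i:\hat b_i\neq 0\}$, $U(b)=-\nabla l(b)$, and for $a>0$ let $T(a)=U(\hat b)+a\hat b$. Then for any $a>0$ and any $r\in\{1,\dots,p\}$, $$R=r \iff T(a)\in H_r.$$
   Context: $|w|_{(1)}\ge\dots\ge|w|_{(p)}$ denote the ordered absolute values of the entries of $w\in\mathbb{R}^p$. For $r\in\{1,\dots,p\}$, $$H_r=\Big\{w\in\mathbb{R}^p:\ \forall_{j\le r}\ \sum_{i=j}^r\lambda_i<\sum_{i=j}^r|w|_{(i)}\ \text{ and }\ \forall_{j\ge r+1}\ \sum_{i=r+1}^j\lambda_i\ge\sum_{i=r+1}^j|w|_{(i)}\Big\}.$$ *)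

theory Defs
  imports "HOL-Analysis.Analysis" "HOL-Library.Multiset"
begin

definition ord_abs :: "real^'n \<Rightarrow> nat \<Rightarrow> real" where
  "ord_abs w i = rev (sorted_list_of_multiset (image_mset (\<lambda>j. \<bar>w $ j\<bar>) (mset_set (UNIV :: 'n set)))) ! (i - 1)"

definition slope_pen :: "(nat \<Rightarrow> real) \<Rightarrow> real^'n \<Rightarrow> real" where
  "slope_pen lam b = (\<Sum>i=1..CARD('n). lam i * ord_abs b i)"

definition H_set :: "(nat \<Rightarrow> real) \<Rightarrow> nat \<Rightarrow> (real^'n) set" where
  "H_set lam r = {w. (\<forall>j\<in>{1..r}. (\<Sum>i=j..r. lam i) < (\<Sum>i=j..r. ord_abs w i))
                    \<and> (\<forall>j\<in>{r+1..CARD('n)}. (\<Sum>i=r+1..j. lam i) \<ge> (\<Sum>i=r+1..j. ord_abs w i))}"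

end

theory Submission
  imports Defs
begin


definition slist :: "('n::finite \<Rightarrow> real) \<Rightarrow> real list" where
  "slist v = rev (sorted_list_of_multiset (image_mset v (mset_set (UNIV :: 'n set))))"

definition topk :: "('n::finite \<Rightarrow> real) \<Rightarrow> nat \<Rightarrow> real" where
  "topk v k = sum_list (take k (slist v))"

lemma slist_len: "length (slist (v::'n::finite \<Rightarrow> real)) = CARD('n)"
proof -
  have "length (slist v) = size (mset (slist v))" by simp
  also have "\<dots> = size (image_mset v (mset_set (UNIV :: 'n set)))"
    unfolding slist_def by (simp only: mset_rev mset_sorted_list_of_multiset)
  finally show ?thesis by simp
qed

lemma slist_mset: "mset (slist (v::'n::finite \<Rightarrow> real)) = image_mset v (mset_set UNIV)"
  unfolding slist_def by (simp only: mset_rev mset_sorted_list_of_multiset)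

lemma slist_sorted: "sorted_wrt (\<ge>) (slist v)"
  unfolding slist_def sorted_wrt_rev using sorted_sorted_list_of_multiset
  by (metis sorted_wrt_mono_rel sorted_wrt_rev)

lemma sub_sum_le:
  fixes xs :: "real list"
  assumes "sorted_wrt (\<ge>) xs" "A \<subseteq># mset xs"
  shows "sum_mset A \<le> sum_list (take (size A) xs)"
  using assms
proof (induction xs arbitrary: A)
  case Nil
  then show ?case by simp
next
  case (Cons x ys)
  have sy: "sorted_wrt (\<ge>) ys" and hx: "\<forall>y\<in>set ys. y \<le> x" using Cons.prems(1) by auto
  show ?case
  proof (cases "x \<in># A")
    case True
    then obtain A' where A': "A = add_mset x A'" by (metis multi_member_split)
    have "A' \<subseteq># mset ys" using Cons.prems(2) A' by simp
    from Cons.IH[OF sy this] show ?thesis using A' by simp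
  next
    case False
    have As: "A \<subseteq># mset ys"
    proof -
      have "count A y \<le> count (mset ys) y" for y
      proof -
        have "count A y \<le> count (mset (x#ys)) y" using Cons.prems(2) by (simp add: subseteq_mset_def)
        then show ?thesis using False by (cases "y = x") (auto simp: count_eq_zero_iff[symmetric])
      qed
      then show ?thesis by (simp add: subseteq_mset_def)
    qed
    show ?thesis
    proof (cases "A = {#}")
      case True then show ?thesis by simp
    next
      case ne: False
      then obtain y A'' where A'': "A = add_mset y A''" by (metis multiset_cases)
      have yin: "y \<in> set ys" using As A'' by (metis insert_subset_eq_iff set_mset_mset)
      have "A'' \<subseteq># A" using A'' by simp
      then have "A'' \<subseteq># mset ys" using As by (rule subset_mset.order_trans)
      from Cons.IH[OF sy this] have "sum_mset A'' \<le> sum_list (take (size A'') ys)" .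
      moreover have "y \<le> x" using hx yin by auto
      ultimately show ?thesis using A'' by simp
    qed
  qed
qed

lemma topk_ge:
  fixes v :: "'n::finite \<Rightarrow> real"
  shows "sum v K \<le> topk v (card K)"
proof -
  have "sum v K = sum_mset (image_mset v (mset_set K))" by (rule sum_unfold_sum_mset)
  also have "\<dots> \<le> sum_list (take (size (image_mset v (mset_set K))) (slist v))"
    apply (rule sub_sum_le[OF slist_sorted])
    unfolding slist_mset
    by (rule image_mset_subseteq_mono, rule subset_imp_msubset_mset_set) auto
  finally show ?thesis unfolding topk_def by simp
qed

lemma msub_image:
  fixes v :: "'a \<Rightarrow> 'b"
  assumes "finite X" "B \<subseteq># image_mset v (mset_set X)"
  shows "\<exists>K\<subseteq>X. image_mset v (mset_set K) = B"
  using assms(2)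
proof (induction B)
  case empty
  show ?case by (rule exI[of _ "{}"]) simp
next
  case (add y B)
  have "B \<subseteq># add_mset y B" by simp
  then have "B \<subseteq># image_mset v (mset_set X)" using add.prems by (rule subset_mset.order_trans)
  from add.IH[OF this] obtain K where K: "K \<subseteq> X" "image_mset v (mset_set K) = B" by blast
  have fK: "finite K" using K assms(1) finite_subset by blast
  have split: "image_mset v (mset_set X) = B + image_mset v (mset_set (X - K))"
  proof -
    have "X = K \<union> (X - K)" using K by blast
    then have "mset_set X = mset_set K + mset_set (X - K)"
      using mset_set_Union[of K "X - K"] fK assms(1) by (metis Diff_disjoint finite_Diff)
    then show ?thesis using K by simp
  qed
  have "count (add_mset y B) y \<le> count (image_mset v (mset_set X)) y"
    using add.prems by (simp only: subseteq_mset_def)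
  then have "count (image_mset v (mset_set X) - B) y > 0" by simp
  then have "y \<in># image_mset v (mset_set X) - B" by (simp only: count_greater_zero_iff)
  then have "y \<in># image_mset v (mset_set (X - K))" using split by simp
  then obtain x where x: "x \<in> X - K" "v x = y" using assms(1) by auto
  show ?case
    apply (rule exI[of _ "insert x K"])
    using x K fK by simp
qed

lemma topk_attain:
  fixes v :: "'n::finite \<Rightarrow> real"
  assumes "k \<le> CARD('n)"
  shows "\<exists>K. card K = k \<and> sum v K = topk v k"
proof -
  have "mset (take k (slist v)) \<subseteq># mset (slist v)"
    by (metis append_take_drop_id mset_append mset_subset_eq_add_left)
  then have "mset (take k (slist v)) \<subseteq># image_mset v (mset_set UNIV)" by (simp add: slist_mset)
  from msub_image[OF _ this] obtain K where K: "image_mset v (mset_set K) = mset (take k (slist v))" by auto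
  have "card K = size (mset_set K)" by simp
  also have "\<dots> = size (mset (take k (slist v)))" using K by (metis size_image_mset)
  also have "\<dots> = k" using assms slist_len[of v] by simp
  finally have "card K = k" .
  moreover have "sum v K = topk v k" unfolding topk_def sum_unfold_sum_mset K sum_mset_sum_list ..
  ultimately show ?thesis by blast
qed

lemma topk_0[simp]: "topk v 0 = 0" by (simp add: topk_def)

lemma topk_mono:
  fixes v :: "'n::finite \<Rightarrow> real"
  assumes "k \<le> CARD('n)" "\<And>j. v j \<le> v' j"
  shows "topk v k \<le> topk v' k"
proof -
  obtain K where K: "card K = k" "sum v K = topk v k" using topk_attain[OF assms(1)] by blast
  have "sum v K \<le> sum v' K" by (rule sum_mono) (use assms(2) in auto)
  also have "\<dots> \<le> topk v' k" using topk_ge[of v' K] K by simp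
  finally show ?thesis using K by simp
qed

lemma ord_abs_top:
  fixes w :: "real^'n"
  assumes "1 \<le> i" "i \<le> CARD('n)"
  shows "ord_abs w i = topk (\<lambda>j. \<bar>w$j\<bar>) i - topk (\<lambda>j. \<bar>w$j\<bar>) (i - 1)"
proof -
  let ?xs = "slist (\<lambda>j. \<bar>w$j\<bar>)"
  have i: "i = Suc (i - 1)" using assms by simp
  have "take i ?xs = take (i-1) ?xs @ [?xs ! (i-1)]"
    using take_Suc_conv_app_nth[of "i-1" ?xs] slist_len[of "\<lambda>j. \<bar>w$j\<bar>"] assms i by simp
  then have "topk (\<lambda>j. \<bar>w$j\<bar>) i = topk (\<lambda>j. \<bar>w$j\<bar>) (i-1) + ?xs ! (i-1)"
    unfolding topk_def by simp
  moreover have "ord_abs w i = ?xs ! (i-1)" unfolding ord_abs_def slist_def ..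
  ultimately show ?thesis by simp
qed



lemma abel:
  fixes lam x :: "nat \<Rightarrow> real"
  assumes "x 0 = 0"
  shows "(\<Sum>i=1..n. lam i * (x i - x (i-1))) = (\<Sum>k=1..<n. (lam k - lam (Suc k)) * x k) + lam n * x n"
proof (induction n)
  case 0
  then show ?case using assms by simp
next
  case (Suc n)
  have "(\<Sum>i=1..Suc n. lam i * (x i - x (i-1))) = (\<Sum>i=1..n. lam i * (x i - x (i-1))) + lam (Suc n) * (x (Suc n) - x n)"
    by simp
  also have "\<dots> = (\<Sum>k=1..<n. (lam k - lam (Suc k)) * x k) + lam n * x n + lam (Suc n) * (x (Suc n) - x n)"
    using Suc by simp
  also have "\<dots> = (\<Sum>k=1..<Suc n. (lam k - lam (Suc k)) * x k) + lam (Suc n) * x (Suc n)"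
  proof (cases n)
    case 0 then show ?thesis using assms by simp
  next
    case (Suc m) then show ?thesis by (simp add: algebra_simps)
  qed
  finally show ?case .
qed

lemma abel_mono:
  fixes lam X Y :: "nat \<Rightarrow> real"
  assumes mono: "\<And>i. 1 \<le> i \<Longrightarrow> i < n \<Longrightarrow> lam i \<ge> lam (i + 1)"
    and nn: "lam n \<ge> 0" and X0: "X 0 = 0" and Y0: "Y 0 = 0"
    and le: "\<And>k. 1 \<le> k \<Longrightarrow> k \<le> n \<Longrightarrow> X k \<le> Y k"
  shows "(\<Sum>i=1..n. lam i * (X i - X (i-1))) \<le> (\<Sum>i=1..n. lam i * (Y i - Y (i-1)))"
proof -
  have "(\<Sum>k=1..<n. (lam k - lam (Suc k)) * X k) \<le> (\<Sum>k=1..<n. (lam k - lam (Suc k)) * Y k)"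
  proof (rule sum_mono)
    fix k assume "k \<in> {1..<n}"
    then show "(lam k - lam (Suc k)) * X k \<le> (lam k - lam (Suc k)) * Y k"
      using mono[of k] le[of k] by (intro mult_left_mono) auto
  qed
  moreover have "lam n * X n \<le> lam n * Y n"
  proof (cases "n = 0")
    case True then show ?thesis using X0 Y0 by simp
  next
    case False then show ?thesis using nn le[of n] by (intro mult_left_mono) auto
  qed
  ultimately show ?thesis unfolding abel[of X, OF X0] abel[of Y, OF Y0] by simp
qed

lemma lam_anti:
  fixes lam :: "nat \<Rightarrow> real"
  assumes mono: "\<And>i. 1 \<le> i \<Longrightarrow> i < n \<Longrightarrow> lam i \<ge> lam (i + 1)"
    and "1 \<le> i" "i \<le> i'" "i' \<le> n"
  shows "lam i' \<le> lam i"
  using assms(3,4)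
proof (induction i' rule: dec_induct)
  case base then show ?case by simp
next
  case (step m)
  then show ?case using mono[of m] assms(2) by simp
qed

lemma ivl_sum:
  fixes f :: "nat \<Rightarrow> real"
  assumes "a \<le> b"
  shows "(\<Sum>i=Suc a..b. f i) = (\<Sum>i=1..b. f i) - (\<Sum>i=1..a. f i)"
  using assms
proof (induction b rule: dec_induct)
  case base then show ?case by simp
next
  case (step m)
  then show ?case by (simp add: sum.cl_ivl_Suc)
qed

lemma cmp:
  fixes lam :: "nat \<Rightarrow> real"
  assumes mono: "\<And>i. 1 \<le> i \<Longrightarrow> i < n \<Longrightarrow> lam i \<ge> lam (i + 1)"
    and "a \<le> b" "b + q \<le> n"
  shows "(\<Sum>i=1..b+q. lam i) - (\<Sum>i=1..b. lam i) \<le> (\<Sum>i=1..a+q. lam i) - (\<Sum>i=1..a. lam i)"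
  using assms(3)
proof (induction q)
  case 0 then show ?case by simp
next
  case (Suc q)
  have "lam (Suc (b + q)) \<le> lam (Suc (a + q))"
    using lam_anti[where n=n and lam=lam, OF mono, of "Suc (a+q)" "Suc (b+q)"] Suc.prems assms(2) by simp
  then show ?case using Suc by simp
qed

lemma Gsum:
  fixes lam :: "nat \<Rightarrow> real"
  assumes "c + m \<le> n"
  shows "(\<Sum>i=1..n. lam i * (real (min (i - c) m) - real (min (i - 1 - c) m)))
       = (\<Sum>i=1..c+m. lam i) - (\<Sum>i=1..c. lam i)"
proof -
  have "(\<Sum>i=1..n. lam i * (real (min (i - c) m) - real (min (i - 1 - c) m)))
      = (\<Sum>i=1..n. if i \<in> {Suc c..c+m} then lam i else 0)"
  proof (rule sum.cong)
    fix i assume "i \<in> {1..n}"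
    then show "lam i * (real (min (i - c) m) - real (min (i - 1 - c) m)) = (if i \<in> {Suc c..c+m} then lam i else 0)"
      by (auto simp: min_def)
  qed simp
  also have "\<dots> = sum lam ({1..n} \<inter> {Suc c..c+m})"
    by (metis (no_types) finite_atLeastAtMost sum.inter_restrict)
  also have "{1..n} \<inter> {Suc c..c+m} = {Suc c..c+m}" using assms by auto
  also have "sum lam {Suc c..c+m} = (\<Sum>i=1..c+m. lam i) - (\<Sum>i=1..c. lam i)"
    by (rule ivl_sum) simp
  finally show ?thesis .
qed



definition Tk :: "nat \<Rightarrow> real^'n \<Rightarrow> real" where
  "Tk k w = topk (\<lambda>j. \<bar>w$j\<bar>) k"

lemma Tk_0[simp]: "Tk 0 w = 0" by (simp add: Tk_def)

lemma Tk_ge: "card K = k \<Longrightarrow> (\<Sum>j\<in>K. \<bar>w$j\<bar>) \<le> Tk k w"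
  unfolding Tk_def using topk_ge by blast

lemma Tk_attain: "k \<le> CARD('n) \<Longrightarrow> \<exists>K. card K = k \<and> (\<Sum>j\<in>K. \<bar>(w::real^'n)$j\<bar>) = Tk k w"
  unfolding Tk_def by (rule topk_attain)

lemma J_T: "slope_pen lam (b::real^'n) = (\<Sum>i=1..CARD('n). lam i * (Tk i b - Tk (i-1) b))"
  unfolding slope_pen_def Tk_def
  by (rule sum.cong) (auto simp: ord_abs_top)

lemma sum_ord_abs:
  fixes w :: "real^'n"
  assumes "k \<le> CARD('n)"
  shows "(\<Sum>i=1..k. ord_abs w i) = Tk k w"
  using assms
proof (induction k)
  case 0 then show ?case by simp
next
  case (Suc k)
  then show ?case by (simp add: ord_abs_top Tk_def)
qed

lemma sum_ord_abs_ivl: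
  fixes w :: "real^'n"
  assumes "a \<le> b" "b \<le> CARD('n)"
  shows "(\<Sum>i=Suc a..b. ord_abs w i) = Tk b w - Tk a w"
  using ivl_sum[OF assms(1), of "ord_abs w"] sum_ord_abs[of b w] sum_ord_abs[of a w] assms by simp

lemma Tk_convex:
  fixes x y :: "real^'n"
  assumes "k \<le> CARD('n)" "0 \<le> t" "t \<le> 1"
  shows "Tk k ((1-t) *\<^sub>R x + t *\<^sub>R y) \<le> (1-t) * Tk k x + t * Tk k y"
proof -
  obtain K where K: "card K = k" "(\<Sum>j\<in>K. \<bar>((1-t) *\<^sub>R x + t *\<^sub>R y)$j\<bar>) = Tk k ((1-t) *\<^sub>R x + t *\<^sub>R y)"
    using Tk_attain[OF assms(1)] by blast
  have "(\<Sum>j\<in>K. \<bar>((1-t) *\<^sub>R x + t *\<^sub>R y)$j\<bar>) \<le> (\<Sum>j\<in>K. (1-t) * \<bar>x$j\<bar> + t * \<bar>y$j\<bar>)"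
  proof (rule sum_mono)
    fix j
    have "\<bar>(1-t) * x$j + t * y$j\<bar> \<le> \<bar>(1-t) * x$j\<bar> + \<bar>t * y$j\<bar>" by (rule abs_triangle_ineq)
    also have "\<dots> = (1-t) * \<bar>x$j\<bar> + t * \<bar>y$j\<bar>" using assms by (simp add: abs_mult)
    finally show "\<bar>((1-t) *\<^sub>R x + t *\<^sub>R y)$j\<bar> \<le> (1-t) * \<bar>x$j\<bar> + t * \<bar>y$j\<bar>" by simp
  qed
  also have "\<dots> = (1-t) * (\<Sum>j\<in>K. \<bar>x$j\<bar>) + t * (\<Sum>j\<in>K. \<bar>y$j\<bar>)"
    by (simp add: sum.distrib sum_distrib_left)
  also have "\<dots> \<le> (1-t) * Tk k x + t * Tk k y"
    using Tk_ge[OF K(1), of x] Tk_ge[OF K(1), of y] assms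
    by (intro add_mono mult_left_mono) auto
  finally show ?thesis using K by simp
qed

lemma J_le:
  fixes b c :: "real^'n" and y :: "nat \<Rightarrow> real"
  assumes mono: "\<And>i. 1 \<le> i \<Longrightarrow> i < CARD('n) \<Longrightarrow> lam i \<ge> lam (i + 1)"
    and nn: "lam (CARD('n)) \<ge> 0"
    and y0: "y 0 = 0"
    and le: "\<And>k. 1 \<le> k \<Longrightarrow> k \<le> CARD('n) \<Longrightarrow> Tk k b \<le> Tk k c + y k"
  shows "slope_pen lam b \<le> slope_pen lam c + (\<Sum>i=1..CARD('n). lam i * (y i - y (i-1)))"
proof -
  have "slope_pen lam b \<le> (\<Sum>i=1..CARD('n). lam i * ((Tk i c + y i) - (Tk (i-1) c + y (i-1))))"
    unfolding J_T by (rule abel_mono[OF mono nn]) (use y0 le in auto)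
  also have "\<dots> = slope_pen lam c + (\<Sum>i=1..CARD('n). lam i * (y i - y (i-1)))"
    unfolding J_T sum.distrib[symmetric] by (rule sum.cong) (auto simp: algebra_simps)
  finally show ?thesis .
qed

lemma J_convex:
  fixes x y :: "real^'n"
  assumes mono: "\<And>i. 1 \<le> i \<Longrightarrow> i < CARD('n) \<Longrightarrow> lam i \<ge> lam (i + 1)"
    and nn: "lam (CARD('n)) \<ge> 0" and t: "0 \<le> t" "t \<le> 1"
  shows "slope_pen lam ((1-t) *\<^sub>R x + t *\<^sub>R y) \<le> (1-t) * slope_pen lam x + t * slope_pen lam y"
proof -
  have "slope_pen lam ((1-t) *\<^sub>R x + t *\<^sub>R y) \<le>
     (\<Sum>i=1..CARD('n). lam i * (((1-t) * Tk i x + t * Tk i y) - ((1-t) * Tk (i-1) x + t * Tk (i-1) y)))"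
    unfolding J_T by (rule abel_mono[OF mono nn]) (use Tk_convex t in auto)
  also have "\<dots> = (1-t) * slope_pen lam x + t * slope_pen lam y"
    unfolding J_T sum_distrib_left sum.distrib[symmetric] by (rule sum.cong) (auto simp: algebra_simps)
  finally show ?thesis .
qed

lemma Aprime:
  fixes l :: "real^'n \<Rightarrow> real" and gradl :: "real^'n \<Rightarrow> real^'n" and bhat b :: "real^'n"
  assumes grad: "\<And>b. (l has_derivative (\<lambda>h. gradl b \<bullet> h)) (at b)"
    and mono: "\<And>i. 1 \<le> i \<Longrightarrow> i < CARD('n) \<Longrightarrow> lam i \<ge> lam (i + 1)"
    and nn: "lam (CARD('n)) \<ge> 0"
    and argmin: "\<And>b. l bhat + slope_pen lam bhat \<le> l b + slope_pen lam b"
  shows "(- gradl bhat) \<bullet> (b - bhat) \<le> slope_pen lam b - slope_pen lam bhat"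
proof -
  define d where "d = b - bhat"
  define Jb where "Jb = slope_pen lam b"
  define Jh where "Jh = slope_pen lam bhat"
  define \<phi> where "\<phi> = (\<lambda>t. l (bhat + t *\<^sub>R d) + ((1-t) * Jh + t * Jb))"
  have h1: "((\<lambda>t::real. bhat + t *\<^sub>R d) has_derivative (\<lambda>t. t *\<^sub>R d)) (at 0)"
    by (auto intro!: derivative_eq_intros)
  have h2: "(l has_derivative (\<lambda>h. gradl bhat \<bullet> h)) (at (bhat + 0 *\<^sub>R d))"
    using grad[of bhat] by simp
  have h3: "((\<lambda>t. l (bhat + t *\<^sub>R d)) has_derivative (\<lambda>t. gradl bhat \<bullet> (t *\<^sub>R d))) (at 0)"
    using has_derivative_compose[OF h1 h2] by simp
  have "(\<lambda>t. gradl bhat \<bullet> (t *\<^sub>R d)) = (*) (gradl bhat \<bullet> d)"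
    by (auto simp: algebra_simps)
  with h3 have h4: "((\<lambda>t. l (bhat + t *\<^sub>R d)) has_real_derivative (gradl bhat \<bullet> d)) (at 0)"
    by (simp add: has_field_derivative_def)
  have h5: "((\<lambda>t. (1-t) * Jh + t * Jb) has_real_derivative (Jb - Jh)) (at 0)"
    by (auto intro!: derivative_eq_intros)
  have hphi: "(\<phi> has_real_derivative (gradl bhat \<bullet> d + (Jb - Jh))) (at 0)"
    unfolding \<phi>_def by (rule DERIV_add[OF h4 h5])
  have ge: "\<phi> t \<ge> \<phi> 0" if t: "0 \<le> t" "t \<le> 1" for t
  proof -
    have "bhat + t *\<^sub>R d = (1-t) *\<^sub>R bhat + t *\<^sub>R b" unfolding d_def by (simp add: algebra_simps)
    then have "slope_pen lam (bhat + t *\<^sub>R d) \<le> (1-t) * Jh + t * Jb"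
      unfolding Jh_def Jb_def using J_convex[OF mono nn t] by simp
    moreover have "l bhat + Jh \<le> l (bhat + t *\<^sub>R d) + slope_pen lam (bhat + t *\<^sub>R d)"
      unfolding Jh_def by (rule argmin)
    ultimately show ?thesis unfolding \<phi>_def by simp
  qed
  have "gradl bhat \<bullet> d + (Jb - Jh) \<ge> 0"
  proof (rule ccontr)
    assume "\<not> ?thesis"
    then have "gradl bhat \<bullet> d + (Jb - Jh) < 0" by simp
    from DERIV_neg_dec_right[OF hphi this] obtain e where e: "e > 0" "\<And>h. h > 0 \<Longrightarrow> h < e \<Longrightarrow> \<phi> (0 + h) < \<phi> 0"
      by blast
    define h where "h = min (e/2) 1"
    have "\<phi> (0 + h) < \<phi> 0" using e unfolding h_def by (intro e(2)) auto
    moreover have "\<phi> h \<ge> \<phi> 0" using e unfolding h_def by (intro ge) auto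
    ultimately show False by simp
  qed
  then show ?thesis unfolding d_def Jb_def Jh_def by (simp add: inner_minus_left)
qed



lemma Lbound:
  fixes bhat :: "real^'n"
  assumes "A \<subseteq> {i. bhat$i \<noteq> 0}" "card A \<le> k" "k \<le> CARD('n)"
    and mu: "\<And>j. bhat$j \<noteq> 0 \<Longrightarrow> \<mu> \<le> \<bar>bhat$j\<bar>" "\<mu> \<ge> 0"
  shows "(\<Sum>j\<in>A. \<bar>bhat$j\<bar>) + \<mu> * (real (min k (card {i. bhat$i \<noteq> 0})) - real (card A)) \<le> Tk k bhat"
proof -
  define S where "S = {i. bhat$i \<noteq> 0}"
  have AS: "A \<subseteq> S" using assms S_def by simp
  have cA: "card A \<le> card S" using AS by (simp add: card_mono)
  have "min k (card S) - card A \<le> card (S - A)" using AS by (simp add: card_Diff_subset)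
  then obtain B where B: "B \<subseteq> S - A" "card B = min k (card S) - card A"
    by (metis obtain_subset_with_card_n)
  have AB: "A \<inter> B = {}" using B by blast
  have cAB: "card (A \<union> B) = min k (card S)"
    using card_Un_disjoint[OF _ _ AB] B cA assms(2) by simp
  have "k - card (A \<union> B) \<le> card (UNIV - (A \<union> B))"
    using cAB assms(3) by (simp add: card_Diff_subset)
  then obtain C where C: "C \<subseteq> UNIV - (A \<union> B)" "card C = k - card (A \<union> B)"
    by (metis obtain_subset_with_card_n)
  have cK: "card (A \<union> B \<union> C) = k"
    using card_Un_disjoint[of "A \<union> B" C] C cAB by auto
  have "(\<Sum>j\<in>A. \<bar>bhat$j\<bar>) + \<mu> * (real (min k (card S)) - real (card A))
      = (\<Sum>j\<in>A. \<bar>bhat$j\<bar>) + (\<Sum>j\<in>B. \<mu>)" using B cA assms(2) by (simp add: of_nat_diff)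
  also have "\<dots> \<le> (\<Sum>j\<in>A. \<bar>bhat$j\<bar>) + (\<Sum>j\<in>B. \<bar>bhat$j\<bar>) + (\<Sum>j\<in>C. \<bar>bhat$j\<bar>)"
  proof -
    have "(\<Sum>j\<in>B. \<mu>) \<le> (\<Sum>j\<in>B. \<bar>bhat$j\<bar>)" using B mu S_def by (intro sum_mono) auto
    moreover have "0 \<le> (\<Sum>j\<in>C. \<bar>bhat$j\<bar>)" by (simp add: sum_nonneg)
    ultimately show ?thesis by linarith
  qed
  also have "\<dots> = (\<Sum>j\<in>A \<union> B \<union> C. \<bar>bhat$j\<bar>)"
  proof -
    have "(A \<union> B) \<inter> C = {}" using C by blast
    then have "(\<Sum>j\<in>A \<union> B \<union> C. \<bar>bhat$j\<bar>) = (\<Sum>j\<in>A \<union> B. \<bar>bhat$j\<bar>) + (\<Sum>j\<in>C. \<bar>bhat$j\<bar>)"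
      by (simp add: sum.union_disjoint)
    moreover have "(\<Sum>j\<in>A \<union> B. \<bar>bhat$j\<bar>) = (\<Sum>j\<in>A. \<bar>bhat$j\<bar>) + (\<Sum>j\<in>B. \<bar>bhat$j\<bar>)"
      using AB by (simp add: sum.union_disjoint)
    ultimately show ?thesis by simp
  qed
  also have "\<dots> \<le> Tk k bhat" using Tk_ge[OF cK] .
  finally show ?thesis unfolding S_def .
qed

lemma mu_exists:
  fixes bhat :: "real^'n"
  shows "\<exists>\<mu>>0. \<forall>j. bhat$j \<noteq> 0 \<longrightarrow> \<mu> \<le> \<bar>bhat$j\<bar>"
proof (cases "{i. bhat$i \<noteq> 0} = {}")
  case True then show ?thesis by (intro exI[of _ 1]) auto
next
  case False
  define \<mu> where "\<mu> = Min ((\<lambda>j. \<bar>bhat$j\<bar>) ` {i. bhat$i \<noteq> 0})"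
  have "\<mu> > 0" unfolding \<mu>_def using False by (subst Min_gr_iff) auto
  moreover have "\<forall>j. bhat$j \<noteq> 0 \<longrightarrow> \<mu> \<le> \<bar>bhat$j\<bar>" unfolding \<mu>_def by (auto intro: Min_le)
  ultimately show ?thesis by blast
qed

context
  fixes l :: "real^'n \<Rightarrow> real" and gradl :: "real^'n \<Rightarrow> real^'n" and lam :: "nat \<Rightarrow> real"
    and bhat :: "real^'n"
  assumes grad: "\<And>b. (l has_derivative (\<lambda>h. gradl b \<bullet> h)) (at b)"
    and mono: "\<And>i. 1 \<le> i \<Longrightarrow> i < CARD('n) \<Longrightarrow> lam i \<ge> lam (i + 1)"
    and nn: "lam (CARD('n)) \<ge> 0"
    and argmin: "\<And>b. l bhat + slope_pen lam bhat \<le> l b + slope_pen lam b"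
begin

lemma AP: "(- gradl bhat) \<bullet> (b - bhat) \<le> slope_pen lam b - slope_pen lam bhat"
  by (rule Aprime[OF grad mono nn argmin])

lemma F0: "(- gradl bhat)$i * bhat$i \<ge> 0"
proof -
  define U where "U = - gradl bhat"
  define b :: "real^'n" where "b = (\<chi> j. if j = i then 0 else bhat$j)"
  have "b - bhat = (\<chi> j. if j = i then - bhat$i else 0)" unfolding b_def by (simp add: vec_eq_iff)
  then have "U \<bullet> (b - bhat) = - (U$i * bhat$i)"
    by (simp add: inner_vec_def if_distrib cong: if_cong)
  moreover have "slope_pen lam b \<le> slope_pen lam bhat + (\<Sum>i=1..CARD('n). lam i * ((\<lambda>_. 0::real) i - (\<lambda>_. 0) (i-1)))"
    by (rule J_le[OF mono nn]) (auto simp: Tk_def b_def intro!: topk_mono)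
  ultimately show ?thesis using AP[of b] unfolding U_def by simp
qed


lemma F1:
  assumes MS: "M \<inter> {i. bhat$i \<noteq> 0} = {}"
  shows "(\<Sum>j\<in>M. \<bar>(- gradl bhat)$j\<bar>) \<le>
    (\<Sum>i=1..card {i. bhat$i \<noteq> 0} + card M. lam i) - (\<Sum>i=1..card {i. bhat$i \<noteq> 0}. lam i)"
proof -
  define U where "U = - gradl bhat"
  define S where "S = {i. bhat$i \<noteq> 0}"
  define r where "r = card S"
  define m where "m = card M"
  obtain \<mu> where mu: "\<mu> > 0" "\<And>j. bhat$j \<noteq> 0 \<Longrightarrow> \<mu> \<le> \<bar>bhat$j\<bar>" using mu_exists[of bhat] by blast
  define z :: "real^'n" where "z = (\<chi> j. if j \<in> M then sgn (U$j) else 0)"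
  define b where "b = bhat + \<mu> *\<^sub>R z"
  have rm: "r + m \<le> CARD('n)"
  proof -
    have "r + m = card (S \<union> M)" unfolding r_def m_def using MS S_def
      by (simp add: card_Un_disjoint inf_commute)
    also have "\<dots> \<le> CARD('n)" by (rule card_mono) auto
    finally show ?thesis .
  qed
  have "U \<bullet> (b - bhat) = \<mu> * (U \<bullet> z)" unfolding b_def by simp
  also have "U \<bullet> z = (\<Sum>j\<in>M. \<bar>U$j\<bar>)"
  proof -
    have "U \<bullet> z = (\<Sum>j\<in>UNIV. if j \<in> M then U$j * sgn (U$j) else 0)"
      unfolding inner_vec_def z_def by (rule sum.cong) auto
    also have "\<dots> = (\<Sum>j\<in>M. U$j * sgn (U$j))" by (simp add: sum.If_cases)
    also have "\<dots> = (\<Sum>j\<in>M. \<bar>U$j\<bar>)" by (simp add: abs_sgn)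
    finally show ?thesis .
  qed
  finally have lhs: "U \<bullet> (b - bhat) = \<mu> * (\<Sum>j\<in>M. \<bar>U$j\<bar>)" .
  define y where "y = (\<lambda>k. \<mu> * real (min (k - r) m))"
  have Tb: "Tk k b \<le> Tk k bhat + y k" if k: "1 \<le> k" "k \<le> CARD('n)" for k
  proof -
    obtain K where K: "card K = k" "(\<Sum>j\<in>K. \<bar>b$j\<bar>) = Tk k b" using Tk_attain[OF k(2)] by blast
    have "(\<Sum>j\<in>K. \<bar>b$j\<bar>) \<le> (\<Sum>j\<in>K. \<bar>bhat$j\<bar> + (if j \<in> M then \<mu> else 0))"
    proof (rule sum_mono)
      fix j assume "j \<in> K"
      show "\<bar>b$j\<bar> \<le> \<bar>bhat$j\<bar> + (if j \<in> M then \<mu> else 0)"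
      proof (cases "j \<in> M")
        case True
        then have "bhat$j = 0" using MS by auto
        then show ?thesis using True mu(1) unfolding b_def z_def by (simp add: abs_mult abs_sgn_eq)
      next
        case False then show ?thesis unfolding b_def z_def by simp
      qed
    qed
    also have "\<dots> = (\<Sum>j\<in>K. \<bar>bhat$j\<bar>) + \<mu> * real (card (K \<inter> M))"
      by (simp add: sum.distrib sum.If_cases Int_def)
    also have "(\<Sum>j\<in>K. \<bar>bhat$j\<bar>) = (\<Sum>j\<in>K \<inter> S. \<bar>bhat$j\<bar>)"
      by (rule sum.mono_neutral_right) (auto simp: S_def)
    finally have 1: "Tk k b \<le> (\<Sum>j\<in>K \<inter> S. \<bar>bhat$j\<bar>) + \<mu> * real (card (K \<inter> M))" using K by simp
    have cKS: "card (K \<inter> S) \<le> k" using K by (metis card_mono finite Int_lower1)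
    have 2: "(\<Sum>j\<in>K \<inter> S. \<bar>bhat$j\<bar>) + \<mu> * (real (min k r) - real (card (K \<inter> S))) \<le> Tk k bhat"
      unfolding r_def S_def by (rule Lbound) (use cKS k mu S_def in auto)
    have n1: "card (K \<inter> M) + card (K \<inter> S) \<le> k"
    proof -
      have "card (K \<inter> M) + card (K \<inter> S) = card ((K \<inter> M) \<union> (K \<inter> S))"
        using MS S_def by (subst card_Un_disjoint) auto
      also have "\<dots> \<le> card K" by (rule card_mono) auto
      finally show ?thesis using K by simp
    qed
    have n2: "card (K \<inter> S) \<le> r" unfolding r_def by (rule card_mono) auto
    have n3: "card (K \<inter> M) \<le> m" unfolding m_def by (rule card_mono) auto
    have "card (K \<inter> M) + card (K \<inter> S) \<le> min k r + min (k - r) m" using n1 n2 n3 by (simp add: min_def)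
    then have "real (card (K \<inter> M)) + real (card (K \<inter> S)) - real (min k r) \<le> real (min (k - r) m)"
      by linarith
    then have "\<mu> * (real (card (K \<inter> M)) + real (card (K \<inter> S)) - real (min k r)) \<le> \<mu> * real (min (k - r) m)"
      using mu(1) by (intro mult_left_mono) auto
    then show ?thesis using 1 2 unfolding y_def by (simp add: algebra_simps)
  qed
  have "slope_pen lam b \<le> slope_pen lam bhat + (\<Sum>i=1..CARD('n). lam i * (y i - y (i-1)))"
    by (rule J_le[OF mono nn]) (use Tb in \<open>auto simp: y_def\<close>)
  also have "(\<Sum>i=1..CARD('n). lam i * (y i - y (i-1))) =
      \<mu> * (\<Sum>i=1..CARD('n). lam i * (real (min (i - r) m) - real (min (i - 1 - r) m)))"
    unfolding y_def sum_distrib_left by (rule sum.cong) (auto simp: algebra_simps)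
  also have "(\<Sum>i=1..CARD('n). lam i * (real (min (i - r) m) - real (min (i - 1 - r) m)))
      = (\<Sum>i=1..r+m. lam i) - (\<Sum>i=1..r. lam i)" by (rule Gsum[OF rm])
  finally have "slope_pen lam b - slope_pen lam bhat \<le> \<mu> * ((\<Sum>i=1..r+m. lam i) - (\<Sum>i=1..r. lam i))" by simp
  with AP[of b] lhs have "\<mu> * (\<Sum>j\<in>M. \<bar>U$j\<bar>) \<le> \<mu> * ((\<Sum>i=1..r+m. lam i) - (\<Sum>i=1..r. lam i))"
    unfolding U_def by simp
  then show ?thesis using mu(1) unfolding U_def r_def m_def S_def by simp
qed


lemma F2:
  assumes QS: "Q \<subseteq> {i. bhat$i \<noteq> 0}"
  shows "(\<Sum>i=1..card {i. bhat$i \<noteq> 0}. lam i) - (\<Sum>i=1..card {i. bhat$i \<noteq> 0} - card Q. lam i)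
     \<le> (\<Sum>j\<in>Q. \<bar>(- gradl bhat)$j\<bar>)"
proof -
  define U where "U = - gradl bhat"
  define S where "S = {i. bhat$i \<noteq> 0}"
  define r where "r = card S"
  define q where "q = card Q"
  have qr: "q \<le> r" unfolding q_def r_def S_def using QS by (simp add: card_mono)
  have rp: "r \<le> CARD('n)" unfolding r_def by (rule card_mono) auto
  obtain \<mu> where mu: "\<mu> > 0" "\<And>j. bhat$j \<noteq> 0 \<Longrightarrow> \<mu> \<le> \<bar>bhat$j\<bar>" using mu_exists[of bhat] by blast
  define z :: "real^'n" where "z = (\<chi> j. if j \<in> Q then sgn (bhat$j) else 0)"
  define b where "b = bhat - \<mu> *\<^sub>R z"
  have Usg: "U$j * sgn (bhat$j) = \<bar>U$j\<bar>" if "j \<in> Q" for j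
  proof -
    have "U$j * bhat$j \<ge> 0" unfolding U_def by (rule F0)
    moreover have "bhat$j \<noteq> 0" using QS that by auto
    ultimately show ?thesis by (cases "bhat$j > 0") (auto simp: zero_le_mult_iff)
  qed
  have "U \<bullet> (b - bhat) = - \<mu> * (U \<bullet> z)" unfolding b_def by simp
  also have "U \<bullet> z = (\<Sum>j\<in>Q. \<bar>U$j\<bar>)"
  proof -
    have "U \<bullet> z = (\<Sum>j\<in>UNIV. if j \<in> Q then U$j * sgn (bhat$j) else 0)"
      unfolding inner_vec_def z_def by (rule sum.cong) auto
    also have "\<dots> = (\<Sum>j\<in>Q. U$j * sgn (bhat$j))" by (simp add: sum.If_cases)
    also have "\<dots> = (\<Sum>j\<in>Q. \<bar>U$j\<bar>)" using Usg by simp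
    finally show ?thesis .
  qed
  finally have lhs: "U \<bullet> (b - bhat) = - \<mu> * (\<Sum>j\<in>Q. \<bar>U$j\<bar>)" .
  define y where "y = (\<lambda>k. - \<mu> * real (min (k - (r - q)) q))"
  have babs: "\<bar>b$j\<bar> = \<bar>bhat$j\<bar> - (if j \<in> Q then \<mu> else 0)" for j
  proof (cases "j \<in> Q")
    case True
    then have ne: "bhat$j \<noteq> 0" using QS by auto
    have "\<mu> \<le> \<bar>bhat$j\<bar>" using mu(2)[OF ne] .
    then show ?thesis using True ne unfolding b_def z_def
      by (cases "bhat$j > 0") (auto simp: abs_if)
  next
    case False then show ?thesis unfolding b_def z_def by simp
  qed
  have Tb: "Tk k b \<le> Tk k bhat + y k" if k: "1 \<le> k" "k \<le> CARD('n)" for k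
  proof -
    obtain K where K: "card K = k" "(\<Sum>j\<in>K. \<bar>b$j\<bar>) = Tk k b" using Tk_attain[OF k(2)] by blast
    have "(\<Sum>j\<in>K. \<bar>b$j\<bar>) = (\<Sum>j\<in>K. \<bar>bhat$j\<bar> - (if j \<in> Q then \<mu> else 0))"
      using babs by simp
    also have "\<dots> = (\<Sum>j\<in>K. \<bar>bhat$j\<bar>) - \<mu> * real (card (K \<inter> Q))"
      by (simp add: sum_subtractf sum.If_cases Int_def)
    also have "(\<Sum>j\<in>K. \<bar>bhat$j\<bar>) = (\<Sum>j\<in>K \<inter> S. \<bar>bhat$j\<bar>)"
      by (rule sum.mono_neutral_right) (auto simp: S_def)
    finally have 1: "Tk k b = (\<Sum>j\<in>K \<inter> S. \<bar>bhat$j\<bar>) - \<mu> * real (card (K \<inter> Q))" using K by simp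
    have cKS: "card (K \<inter> S) \<le> k" using K by (metis card_mono finite Int_lower1)
    have 2: "(\<Sum>j\<in>K \<inter> S. \<bar>bhat$j\<bar>) + \<mu> * (real (min k r) - real (card (K \<inter> S))) \<le> Tk k bhat"
      unfolding r_def S_def by (rule Lbound) (use cKS k mu S_def in auto)
    have n1: "card (K \<inter> S) \<le> card (K \<inter> Q) + (r - q)"
    proof -
      have "K \<inter> S \<subseteq> (K \<inter> Q) \<union> (S - Q)" by blast
      then have "card (K \<inter> S) \<le> card ((K \<inter> Q) \<union> (S - Q))" by (intro card_mono) auto
      also have "\<dots> \<le> card (K \<inter> Q) + card (S - Q)" by (rule card_Un_le)
      also have "card (S - Q) = r - q" unfolding r_def q_def using QS S_def by (simp add: card_Diff_subset)
      finally show ?thesis .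
    qed
    have n2: "card (K \<inter> Q) \<le> q" unfolding q_def by (rule card_mono) auto
    have n3: "card (K \<inter> S) \<le> r" unfolding r_def by (rule card_mono) auto
    have "min (k - (r - q)) q + card (K \<inter> S) \<le> min k r + card (K \<inter> Q)"
    proof (cases "k \<le> r")
      case True
      then have "min k r = k" by simp
      moreover have "min (k - (r - q)) q = k - (r - q)" using True qr by simp
      ultimately show ?thesis using n1 cKS qr by linarith
    next
      case False
      then have "min k r = r" by simp
      moreover have "min (k - (r - q)) q = q" using False qr by simp
      ultimately show ?thesis using n1 qr by linarith
    qed
    then have "real (min (k - (r - q)) q) \<le> real (min k r) - real (card (K \<inter> S)) + real (card (K \<inter> Q))"
      by linarith
    then have "\<mu> * real (min (k - (r - q)) q) \<le> \<mu> * (real (min k r) - real (card (K \<inter> S)) + real (card (K \<inter> Q)))"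
      using mu(1) by (intro mult_left_mono) auto
    then show ?thesis using 1 2 unfolding y_def by (simp add: algebra_simps)
  qed
  have rq: "(r - q) + q \<le> CARD('n)" using qr rp by simp
  have "slope_pen lam b \<le> slope_pen lam bhat + (\<Sum>i=1..CARD('n). lam i * (y i - y (i-1)))"
    by (rule J_le[OF mono nn]) (use Tb in \<open>auto simp: y_def\<close>)
  also have "(\<Sum>i=1..CARD('n). lam i * (y i - y (i-1))) =
      - \<mu> * (\<Sum>i=1..CARD('n). lam i * (real (min (i - (r - q)) q) - real (min (i - 1 - (r - q)) q)))"
    unfolding y_def sum_distrib_left by (rule sum.cong) (auto simp: algebra_simps)
  also have "(\<Sum>i=1..CARD('n). lam i * (real (min (i - (r - q)) q) - real (min (i - 1 - (r - q)) q)))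
      = (\<Sum>i=1..(r - q)+q. lam i) - (\<Sum>i=1..r - q. lam i)" by (rule Gsum[OF rq])
  finally have "slope_pen lam b - slope_pen lam bhat \<le> - \<mu> * ((\<Sum>i=1..r. lam i) - (\<Sum>i=1..r - q. lam i))"
    using qr by simp
  with AP[of b] lhs have "\<mu> * ((\<Sum>i=1..r. lam i) - (\<Sum>i=1..r - q. lam i)) \<le> \<mu> * (\<Sum>j\<in>Q. \<bar>U$j\<bar>)"
    unfolding U_def by simp
  then show ?thesis using mu(1) unfolding U_def r_def q_def S_def by simp
qed


lemma absw:
  assumes "a > 0"
  shows "\<bar>(- gradl bhat + a *\<^sub>R bhat)$j\<bar> = \<bar>(- gradl bhat)$j\<bar> + a * \<bar>bhat$j\<bar>"
proof -
  have h: "(- gradl bhat)$j * bhat$j \<ge> 0" by (rule F0)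
  define x where "x = (- gradl bhat)$j"
  define y where "y = bhat$j"
  have "x * y \<ge> 0" using h x_def y_def by simp
  then have "x \<ge> 0 \<and> y \<ge> 0 \<or> x \<le> 0 \<and> y \<le> 0" by (auto simp: zero_le_mult_iff)
  then have "\<bar>x + a * y\<bar> = \<bar>x\<bar> + a * \<bar>y\<bar>"
  proof
    assume h: "x \<ge> 0 \<and> y \<ge> 0"
    then have "a * y \<ge> 0" using assms by simp
    then show ?thesis using h assms by (simp add: abs_mult)
  next
    assume h: "x \<le> 0 \<and> y \<le> 0"
    then have "a * y \<le> 0" using assms by (simp add: mult_nonneg_nonpos)
    then show ?thesis using h assms by (simp add: abs_mult)
  qed
  then show ?thesis unfolding x_def y_def by simp
qed

lemma card_split: "card (K::'n set) = card (K \<inter> S) + card (K - S)"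
proof -
  have "K = (K \<inter> S) \<union> (K - S)" by blast
  then have "card K = card ((K \<inter> S) \<union> (K - S))" by simp
  also have "\<dots> = card (K \<inter> S) + card (K - S)" by (rule card_Un_disjoint) auto
  finally show ?thesis .
qed

lemma Comb:
  assumes "a > 0"
  shows "(\<Sum>j\<in>{i. bhat$i \<noteq> 0}. \<bar>(- gradl bhat + a *\<^sub>R bhat)$j\<bar>) - (\<Sum>j\<in>K. \<bar>(- gradl bhat + a *\<^sub>R bhat)$j\<bar>)
    \<ge> ((\<Sum>i=1..card {i. bhat$i \<noteq> 0}. lam i) - (\<Sum>i=1..card {i. bhat$i \<noteq> 0} - card ({i. bhat$i \<noteq> 0} - K). lam i))
      - ((\<Sum>i=1..card {i. bhat$i \<noteq> 0} + card (K - {i. bhat$i \<noteq> 0}). lam i) - (\<Sum>i=1..card {i. bhat$i \<noteq> 0}. lam i))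
      + a * (\<Sum>j\<in>{i. bhat$i \<noteq> 0} - K. \<bar>bhat$j\<bar>)"
proof -
  define S where "S = {i. bhat$i \<noteq> 0}"
  define f where "f = (\<lambda>j. \<bar>(- gradl bhat + a *\<^sub>R bhat)$j\<bar>)"
  have "sum f S = sum f (K \<inter> S) + sum f (S - K)" using sum.Int_Diff[of S f K] by (simp add: Int_commute)
  moreover have "sum f K = sum f (K \<inter> S) + sum f (K - S)" by (rule sum.Int_Diff) simp
  moreover have "sum f (S - K) = (\<Sum>j\<in>S - K. \<bar>(- gradl bhat)$j\<bar>) + a * (\<Sum>j\<in>S - K. \<bar>bhat$j\<bar>)"
    unfolding f_def absw[OF assms] by (simp add: sum.distrib sum_distrib_left)
  moreover have "sum f (K - S) = (\<Sum>j\<in>K - S. \<bar>(- gradl bhat)$j\<bar>)"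
    unfolding f_def by (rule sum.cong) (auto simp: S_def)
  moreover have "(\<Sum>i=1..card S. lam i) - (\<Sum>i=1..card S - card (S - K). lam i) \<le> (\<Sum>j\<in>S - K. \<bar>(- gradl bhat)$j\<bar>)"
    unfolding S_def by (rule F2) auto
  moreover have "(\<Sum>j\<in>K - S. \<bar>(- gradl bhat)$j\<bar>) \<le> (\<Sum>i=1..card S + card (K - S). lam i) - (\<Sum>i=1..card S. lam i)"
    unfolding S_def by (rule F1) auto
  moreover have "S \<inter> K = K \<inter> S" by blast
  ultimately show ?thesis unfolding S_def[symmetric] f_def[symmetric] by linarith
qed

lemma fwd:
  assumes apos: "a > 0" and ne: "{i. bhat$i \<noteq> 0} \<noteq> {}"
  shows "(- gradl bhat + a *\<^sub>R bhat) \<in> H_set lam (card {i. bhat$i \<noteq> 0})"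
proof -
  define S where "S = {i. bhat$i \<noteq> 0}"
  define r where "r = card S"
  define w where "w = - gradl bhat + a *\<^sub>R bhat"
  define L where "L = (\<lambda>n. \<Sum>i=1..n. lam i)"
  have rp: "r \<le> CARD('n)" unfolding r_def by (rule card_mono) auto
  have TS: "(\<Sum>j\<in>S. \<bar>w$j\<bar>) \<le> Tk r w" unfolding r_def by (rule Tk_ge) simp
  have C: "(\<Sum>j\<in>S. \<bar>w$j\<bar>) - (\<Sum>j\<in>K. \<bar>w$j\<bar>) \<ge> (L r - L (r - card (S - K))) - (L (r + card (K - S)) - L r)
            + a * (\<Sum>j\<in>S - K. \<bar>bhat$j\<bar>)" for K
    using Comb[OF apos, of K] unfolding S_def[symmetric] r_def[symmetric] L_def w_def .
  have rm: "r + card (K - S) \<le> CARD('n)" for K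
  proof -
    have "r + card (K - S) = card (S \<union> (K - S))" unfolding r_def by (rule card_Un_disjoint[symmetric]) auto
    also have "\<dots> \<le> CARD('n)" by (rule card_mono) auto
    finally show ?thesis .
  qed
  have part2: "(\<Sum>i=r+1..j. lam i) \<ge> (\<Sum>i=r+1..j. ord_abs w i)" if j: "j \<in> {r+1..CARD('n)}" for j
  proof -
    obtain K where K: "card K = j" "(\<Sum>j\<in>K. \<bar>w$j\<bar>) = Tk j w" using Tk_attain[of j w] j by auto
    define m where "m = card (K - S)"
    define q where "q = card (S - K)"
    have cK: "j = card (K \<inter> S) + m" unfolding m_def using card_split[of K S] K by simp
    have cS: "r = card (K \<inter> S) + q" unfolding q_def r_def using card_split[of S K] by (simp add: Int_commute)
    have eq: "r + m = j + q" using cK cS by simp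
    have cmp1: "L (j + q) - L j \<le> L ((r - q) + q) - L (r - q)"
      unfolding L_def by (rule cmp[where lam=lam and n="CARD('n)", OF mono]) (use j eq rm[of K] m_def cS in auto)
    have "r - q + q = r" using cS by simp
    then have cmp2: "L (r + m) - L j \<le> L r - L (r - q)" using cmp1 eq by simp
    have "0 \<le> a * (\<Sum>j\<in>S - K. \<bar>bhat$j\<bar>)" using apos by (simp add: sum_nonneg)
    then have "Tk j w \<le> Tk r w + (L j - L r)"
      using C[of K] K TS cmp2 unfolding m_def q_def by linarith
    moreover have "(\<Sum>i=r+1..j. lam i) = L j - L r" unfolding L_def using ivl_sum[of r j lam] j by simp
    moreover have "(\<Sum>i=r+1..j. ord_abs w i) = Tk j w - Tk r w" using sum_ord_abs_ivl[of r j w] j by simp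
    ultimately show ?thesis by simp
  qed
  have part1: "(\<Sum>i=j..r. lam i) < (\<Sum>i=j..r. ord_abs w i)" if j: "j \<in> {1..r}" for j
  proof -
    have "j \<le> r" using j by simp
    then have jr: "j - 1 \<le> CARD('n)" using rp by linarith
    obtain K where K: "card K = j - 1" "(\<Sum>j\<in>K. \<bar>w$j\<bar>) = Tk (j - 1) w" using Tk_attain[OF jr, of w] by auto
    define m where "m = card (K - S)"
    define q where "q = card (S - K)"
    have cK: "j - 1 = card (K \<inter> S) + m" unfolding m_def using card_split[of K S] K by simp
    have cS: "r = card (K \<inter> S) + q" unfolding q_def r_def using card_split[of S K] by (simp add: Int_commute)
    have "1 \<le> j" "j \<le> r" using j by auto
    then have q1: "q \<ge> 1" using cK cS by linarith
    have cmp1: "L (r + m) - L r \<le> L ((r - q) + m) - L (r - q)"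
      unfolding L_def by (rule cmp[where lam=lam and n="CARD('n)", OF mono]) (use rm[of K] m_def in auto)
    have "r - q + m = j - 1" using cK cS by simp
    then have cmp2: "L (r + m) - L r \<le> L (j - 1) - L (r - q)" using cmp1 by simp
    have "S - K \<noteq> {}" using q1 q_def by (metis card.empty not_one_le_zero)
    moreover have "\<forall>x\<in>S - K. 0 < \<bar>bhat$x\<bar>" unfolding S_def by auto
    ultimately have "0 < (\<Sum>j\<in>S - K. \<bar>bhat$j\<bar>)" by (intro sum_pos) auto
    then have "0 < a * (\<Sum>j\<in>S - K. \<bar>bhat$j\<bar>)" using apos by simp
    then have "Tk r w - Tk (j - 1) w > L r - L (j - 1)"
      using C[of K] K TS cmp2 unfolding m_def q_def by linarith
    moreover have "(\<Sum>i=j..r. lam i) = L r - L (j - 1)" unfolding L_def using ivl_sum[of "j-1" r lam] \<open>j \<le> r\<close> \<open>1 \<le> j\<close> by simp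
    moreover have "(\<Sum>i=j..r. ord_abs w i) = Tk r w - Tk (j - 1) w" using sum_ord_abs_ivl[of "j-1" r w] \<open>j \<le> r\<close> \<open>1 \<le> j\<close> rp by simp
    ultimately show ?thesis by simp
  qed
  show ?thesis unfolding H_set_def w_def[symmetric] S_def[symmetric] r_def[symmetric]
    using part1 part2 by blast
qed

lemma zero_case:
  assumes "{i. bhat$i \<noteq> 0} = {}" "r \<in> {1..CARD('n)}"
  shows "(- gradl bhat + a *\<^sub>R bhat) \<notin> H_set lam r"
proof
  define w where "w = - gradl bhat + a *\<^sub>R bhat"
  assume "(- gradl bhat + a *\<^sub>R bhat) \<in> H_set lam r"
  then have "(\<Sum>i=1..r. lam i) < (\<Sum>i=1..r. ord_abs w i)" unfolding H_set_def w_def using assms(2) by auto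
  also have "\<dots> = Tk r w" using sum_ord_abs[of r w] assms(2) by simp
  finally have lt: "(\<Sum>i=1..r. lam i) < Tk r w" .
  obtain K where K: "card K = r" "(\<Sum>j\<in>K. \<bar>w$j\<bar>) = Tk r w" using Tk_attain[of r w] assms(2) by auto
  have b0: "bhat$j = 0" for j using assms(1) by auto
  have "(\<Sum>j\<in>K. \<bar>w$j\<bar>) = (\<Sum>j\<in>K. \<bar>(- gradl bhat)$j\<bar>)" unfolding w_def using b0 by simp
  also have "\<dots> \<le> (\<Sum>i=1..card {i. bhat$i \<noteq> 0} + card K. lam i) - (\<Sum>i=1..card {i. bhat$i \<noteq> 0}. lam i)"
    by (rule F1) (use assms(1) in auto)
  also have "\<dots> = (\<Sum>i=1..r. lam i)" using assms(1) K by simp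
  finally show False using lt K by simp
qed

end

lemma H_disj:
  fixes w :: "real^'n::finite"
  assumes "w \<in> H_set lam r1" "w \<in> H_set lam r2" "1 \<le> r1" "r1 < r2" "r2 \<le> CARD('n)"
  shows False
proof -
  have "(\<Sum>i=r1+1..r2. lam i) \<ge> (\<Sum>i=r1+1..r2. ord_abs w i)"
    using assms(1,4,5) unfolding H_set_def by auto
  moreover have "(\<Sum>i=r1+1..r2. lam i) < (\<Sum>i=r1+1..r2. ord_abs w i)"
    using assms(2,4) unfolding H_set_def by auto
  ultimately show False by simp
qed

theorem theorem2:
  fixes l :: "real^'n \<Rightarrow> real"
    and gradl :: "real^'n \<Rightarrow> real^'n"
    and lam :: "nat \<Rightarrow> real"
    and bhat :: "real^'n"
    and a :: real and r :: nat
  assumes convex: "convex_on UNIV l"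
    and grad: "\<And>b. (l has_derivative (\<lambda>h. gradl b \<bullet> h)) (at b)"
    and lam_mono: "\<And>i. 1 \<le> i \<Longrightarrow> i < CARD('n) \<Longrightarrow> lam i \<ge> lam (i + 1)"
    and lam_nonneg: "lam (CARD('n)) \<ge> 0"
    and argmin: "\<And>b. l bhat + slope_pen lam bhat \<le> l b + slope_pen lam b"
    and a_pos: "a > 0"
    and r_range: "r \<in> {1..CARD('n)}"
  shows "card {i. bhat $ i \<noteq> 0} = r \<longleftrightarrow> (- gradl bhat + a *\<^sub>R bhat) \<in> H_set lam r"
proof
  assume "card {i. bhat $ i \<noteq> 0} = r"
  moreover have "{i. bhat $ i \<noteq> 0} \<noteq> {}" using calculation r_range
    by (metis atLeastAtMost_iff card.empty not_one_le_zero)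
  ultimately show "(- gradl bhat + a *\<^sub>R bhat) \<in> H_set lam r"
    using fwd[OF grad lam_mono lam_nonneg argmin a_pos] by blast
next
  assume H: "(- gradl bhat + a *\<^sub>R bhat) \<in> H_set lam r"
  define R where "R = card {i. bhat $ i \<noteq> 0}"
  have Rp: "R \<le> CARD('n)" unfolding R_def by (rule card_mono) auto
  show "card {i. bhat $ i \<noteq> 0} = r"
  proof (cases "{i. bhat $ i \<noteq> 0} = {}")
    case True
    then show ?thesis using zero_case[OF grad lam_mono lam_nonneg argmin True r_range] H by blast
  next
    case False
    then have R1: "R \<ge> 1" unfolding R_def by (simp add: Suc_leI card_gt_0_iff)
    have HR: "(- gradl bhat + a *\<^sub>R bhat) \<in> H_set lam R"
      unfolding R_def using fwd[OF grad lam_mono lam_nonneg argmin a_pos False] .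
    show ?thesis
    proof (rule ccontr)
      assume "card {i. bhat $ i \<noteq> 0} \<noteq> r"
      then have "R < r \<or> r < R" unfolding R_def by auto
      then show False
      proof
        assume "R < r" then show False using H_disj[OF HR H R1] r_range by auto
      next
        assume "r < R" then show False using H_disj[OF H HR] r_range Rp by auto
      qed
    qed
  qed
qed

end
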